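(* Let $A\in\mathbb{R}^{2\times 2}$ be a symmetric matrix with eigenvalues $1$ and $\lambda>0$. Identify $\mathbb{C}$ with $\mathbb{R}^2$ via $x+iy\leftrightarrow (x,y)^t$, so that $A$ acts on $\mathbb{C}$ as an $\mathbb{R}$-linear map. Then \[ \{h\cdot\overline{Ah} : h\in\mathbb{C}\}=\Sigma\Bigl(\arcsin\tfrac{|\lambda-1|}{\lambda+1}\Bigr), \] where $h\cdot\overline{Ah}$ is the product of the complex numbers $h$ and $\overline{Ah}$ (complex conjugate of $Ah$).
   Context: For $0\le\varphi\le\frac{\pi}{2}$, the sector is $\Sigma(\varphi):=\{z\in\mathbb{C}\setminus\{0\}: |\arg z|\le\varphi\}\cup\{0\}$, where $\arg$ is the principal argument with values in $(-\pi,\pi]$. *)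

theory Defs
  imports "HOL-Analysis.Analysis"
begin

definition sector :: "real \<Rightarrow> complex set" where
  "sector phi = {z. z \<noteq> 0 \<and> \<bar>Arg z\<bar> \<le> phi} \<union> {0}"

definition vec_of_complex :: "complex \<Rightarrow> real^2" where
  "vec_of_complex z = vector [Re z, Im z]"

definition complex_of_vec :: "real^2 \<Rightarrow> complex" where
  "complex_of_vec v = Complex (v $ 1) (v $ 2)"

definition mat_act :: "real^2^2 \<Rightarrow> complex \<Rightarrow> complex" where
  "mat_act A h = complex_of_vec (A *v vec_of_complex h)"

definition mat_eigenvalues :: "real^'n^'n \<Rightarrow> real set" where
  "mat_eigenvalues A = {mu. \<exists>v. v \<noteq> 0 \<and> A *v v = mu *\<^sub>R v}"

end

theory Submission
  imports Defs
begin



lemma sector_iff: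
  assumes "z \<noteq> 0" "0 \<le> s" "s \<le> 1"
  shows "z \<in> sector (arcsin s) \<longleftrightarrow> Re z \<ge> 0 \<and> \<bar>Im z\<bar> \<le> s * cmod z"
proof -
  define t where "t = Arg z"
  have tb: "-pi < t" "t \<le> pi" using Arg_bounded t_def by auto
  have nz: "cmod z > 0" using assms by simp
  have ct: "cos t = Re z / cmod z" and st: "sin t = Im z / cmod z"
    using cos_Arg sin_Arg assms t_def by auto
  have as: "0 \<le> arcsin s" "arcsin s \<le> pi/2" using assms arcsin_bounded[of s] arcsin_le_arcsin[of 0 s] by auto
  have sa: "sin \<bar>t\<bar> = \<bar>sin t\<bar>"
    by (cases "t \<ge> 0") (use tb sin_ge_zero[of t] sin_ge_zero[of "-t"] in \<open>auto simp: abs_if\<close>)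
  have ca: "cos \<bar>t\<bar> = cos t" by (simp add: abs_if)
  have "\<bar>t\<bar> \<le> arcsin s \<longleftrightarrow> Re z \<ge> 0 \<and> \<bar>Im z\<bar> \<le> s * cmod z"
  proof
    assume h: "\<bar>t\<bar> \<le> arcsin s"
    have "cos t \<ge> 0" using ca cos_ge_zero[of "\<bar>t\<bar>"] h as by auto
    hence "Re z \<ge> 0" using ct nz by (simp add: zero_le_divide_iff)
    moreover have "sin \<bar>t\<bar> \<le> sin (arcsin s)"
      using h as by (intro sin_monotone_2pi_le) auto
    hence "\<bar>Im z\<bar> / cmod z \<le> s" using sa st assms by (simp add: abs_divide)
    hence "\<bar>Im z\<bar> \<le> s * cmod z" using nz by (simp add: divide_le_eq)
    ultimately show "Re z \<ge> 0 \<and> \<bar>Im z\<bar> \<le> s * cmod z" by simp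
  next
    assume h: "Re z \<ge> 0 \<and> \<bar>Im z\<bar> \<le> s * cmod z"
    have "cos t \<ge> 0" using ct h nz by simp
    have tp: "\<bar>t\<bar> \<le> pi/2"
    proof (rule ccontr)
      assume "\<not> ?thesis"
      hence "pi/2 < \<bar>t\<bar>" "\<bar>t\<bar> \<le> pi" using tb by auto
      hence "cos \<bar>t\<bar> < 0" by (intro cos_lt_zero_pi) auto
      thus False using ca \<open>cos t \<ge> 0\<close> by simp
    qed
    have "\<bar>sin t\<bar> \<le> s" using h st nz by (simp add: abs_divide divide_le_eq)
    hence "sin \<bar>t\<bar> \<le> s" using sa by simp
    hence "arcsin (sin \<bar>t\<bar>) \<le> arcsin s"
      using assms tp by (intro arcsin_le_arcsin) (auto simp: sin_ge_minus_one) 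
    thus "\<bar>t\<bar> \<le> arcsin s" using tp arcsin_sin[of "\<bar>t\<bar>"] by simp
  qed
  thus ?thesis using assms unfolding sector_def t_def by auto
qed




lemma image_sector:
  fixes l :: real
  assumes l: "l > 0"
  shows "{Complex (a^2 + l*b^2) ((1-l)*a*b) | a b. True} = sector (arcsin (\<bar>l - 1\<bar> / (l + 1)))"
    (is "?S = sector (arcsin ?s)")
proof -
  have s0: "0 \<le> ?s" and s1: "?s \<le> 1" using l by auto
  have key: "\<bar>Y\<bar> \<le> ?s * cmod (Complex X Y) \<longleftrightarrow> 4*l*Y^2 \<le> (l-1)^2*X^2" for X Y
  proof -
    have "\<bar>Y\<bar> \<le> ?s * cmod (Complex X Y) \<longleftrightarrow> Y^2 \<le> (?s * cmod (Complex X Y))^2"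
      using s0 by (metis abs_le_square_iff abs_of_nonneg mult_nonneg_nonneg norm_ge_zero)
    also have "(?s * cmod (Complex X Y))^2 = (l-1)^2/(l+1)^2 * (X^2+Y^2)"
      by (simp add: power_mult_distrib power_divide cmod_def)
    also have "Y^2 \<le> (l-1)^2/(l+1)^2 * (X^2+Y^2) \<longleftrightarrow> (l+1)^2 * Y^2 \<le> (l-1)^2 * (X^2+Y^2)"
      using l by (simp add: field_simps)
    also have "\<dots> \<longleftrightarrow> 4*l*Y^2 \<le> (l-1)^2*X^2" by (simp add: algebra_simps power2_eq_square)
    finally show ?thesis .
  qed
  show ?thesis
  proof (rule set_eqI, rule iffI)
    fix z assume "z \<in> ?S"
    then obtain a b where z: "z = Complex (a^2 + l*b^2) ((1-l)*a*b)" by auto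
    show "z \<in> sector (arcsin ?s)"
    proof (cases "z = 0")
      case True thus ?thesis by (simp add: sector_def)
    next
      case False
      have "(l-1)^2*(a^2 + l*b^2)^2 - 4*l*((1-l)*a*b)^2 = (l-1)^2*(a^2-l*b^2)^2"
        by (simp add: algebra_simps power2_eq_square)
      moreover have "0 \<le> (l-1)^2*(a^2-l*b^2)^2" by simp
      ultimately have "4*l*((1-l)*a*b)^2 \<le> (l-1)^2*(a^2 + l*b^2)^2" by linarith
      hence "\<bar>Im z\<bar> \<le> ?s * cmod z" using key z by simp
      moreover have "Re z \<ge> 0" using z l by simp
      ultimately show ?thesis using sector_iff[OF False s0 s1] by simp
    qed
  next
    fix z assume zs: "z \<in> sector (arcsin ?s)"
    show "z \<in> ?S"
    proof (cases "z = 0")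
      case True thus ?thesis by (auto intro!: exI[of _ 0] simp: complex_eq_iff)
    next
      case False
      define X where "X = Re z"
      define Y where "Y = Im z"
      have zXY: "z = Complex X Y" by (simp add: X_def Y_def)
      have hz: "Re z \<ge> 0 \<and> \<bar>Im z\<bar> \<le> ?s * cmod z"
        using sector_iff[OF False s0 s1] zs by blast
      have X0: "X \<ge> 0" using hz X_def by simp
      have "\<bar>Y\<bar> \<le> ?s * cmod (Complex X Y)" using hz Y_def zXY by metis
      hence iq: "4*l*Y^2 \<le> (l-1)^2*X^2" using key by blast
      have Xp: "X > 0"
      proof (rule ccontr)
        assume "\<not> X > 0" hence "X = 0" using X0 by simp
        hence "(4*l)*Y^2 \<le> 0" using iq by simp
        hence "Y^2 \<le> 0" using l by (simp add: mult_le_0_iff)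
        hence "Y = 0" by simp
        thus False using False zXY \<open>X = 0\<close> by (simp add: complex_eq_iff)
      qed
      show ?thesis
      proof (cases "l = 1")
        case True
        hence "Y = 0" using iq by simp
        hence "z = Complex ((sqrt X)^2 + l*0^2) ((1-l) * sqrt X * 0)" using zXY X0 by simp
        thus ?thesis by blast
      next
        case False
        define t where "t = Y/(1-l)"
        have Yt: "Y = (1-l)*t" using False by (simp add: t_def)
        have iq2: "4*l*t^2 \<le> X^2"
        proof -
          have "(l-1)^2*(4*l*t^2) \<le> (l-1)^2*X^2" using iq Yt by (simp add: power_mult_distrib algebra_simps power2_eq_square)
          moreover have "(l-1)^2 > 0" using False by simp
          ultimately show ?thesis by simp
        qed
        define S where "S = sqrt (X^2 - 4*l*t^2)"
        have S0: "S \<ge> 0" and S2: "S^2 = X^2 - 4*l*t^2" using iq2 by (auto simp: S_def)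
        define A2 where "A2 = (X + S)/2"
        have A2p: "A2 > 0" using Xp S0 by (simp add: A2_def)
        define a where "a = sqrt A2"
        have ap: "a > 0" and a2: "a^2 = A2" using A2p by (auto simp: a_def)
        define b where "b = t/a"
        have "A2^2 - X*A2 + l*t^2 = 0" unfolding A2_def using S2 by (simp add: field_simps power2_eq_square)
        hence e: "A2*A2 + l*t^2 = X*A2" by (simp add: power2_eq_square)
        have "l*b^2 = l*t^2/A2" using a2 by (simp add: b_def power_divide)
        hence "a^2 + l*b^2 = (A2*A2 + l*t^2)/A2" using a2 A2p by (simp add: field_simps)
        hence "a^2 + l*b^2 = X" using e A2p by simp
        moreover have "(1-l)*a*b = Y" using ap Yt by (simp add: b_def)
        ultimately have "z = Complex (a^2 + l*b^2) ((1-l)*a*b)" using zXY by simp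
        thus ?thesis by blast
      qed
    qed
  qed
qed




lemma mat_act_eq:
  "mat_act A h = Complex (A$1$1 * Re h + A$1$2 * Im h) (A$2$1 * Re h + A$2$2 * Im h)"
  by (simp add: mat_act_def complex_of_vec_def vec_of_complex_def matrix_vector_mult_def sum_2)

lemma mulv_2: "(A *v (v::real^2)) $ 1 = A$1$1 * v$1 + A$1$2 * v$2"
  "(A *v (v::real^2)) $ 2 = A$2$1 * v$1 + A$2$2 * v$2"
  by (simp_all add: matrix_vector_mult_def sum_2)

lemma vec2_nz: "(v::real^2) \<noteq> 0 \<longleftrightarrow> v$1 \<noteq> 0 \<or> v$2 \<noteq> 0"
  by (metis (mono_tags) exhaust_2 vec_eq_iff zero_index)

lemma eig2:
  assumes "mu \<in> mat_eigenvalues (A::real^2^2)"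
  shows "(A$1$1 - mu)*(A$2$2 - mu) - A$1$2 * A$2$1 = 0"
proof -
  obtain v where v: "v \<noteq> 0" "A *v v = mu *\<^sub>R v" using assms by (auto simp: mat_eigenvalues_def)
  define p where "p = A$1$1" define q where "q = A$1$2"
  define q' where "q' = A$2$1" define r where "r = A$2$2"
  define x where "x = v$1" define y where "y = v$2"
  have e1: "(p - mu)*x = - q*y" and e2: "q'*x = -(r - mu)*y"
    using arg_cong[OF v(2), of "\<lambda>w. w$1"] arg_cong[OF v(2), of "\<lambda>w. w$2"]
    by (auto simp: mulv_2 p_def q_def q'_def r_def x_def y_def algebra_simps)
  have e1': "q*y = -(p-mu)*x" and e2': "(r-mu)*y = -q'*x" using e1 e2 by (simp_all add: algebra_simps)
  have "((p-mu)*(r-mu) - q*q')*x = (r-mu)*((p-mu)*x) - q*(q'*x)" by (simp add: algebra_simps)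
  also have "\<dots> = (r-mu)*(- q*y) - q*(-(r - mu)*y)" by (simp only: e1 e2)
  also have "\<dots> = 0" by (simp add: algebra_simps)
  finally have 1: "((p-mu)*(r-mu) - q*q')*x = 0" .
  have "((p-mu)*(r-mu) - q*q')*y = (p-mu)*((r-mu)*y) - q'*(q*y)" by (simp add: algebra_simps)
  also have "\<dots> = (p-mu)*(-q'*x) - q'*(-(p-mu)*x)" by (simp only: e1' e2')
  also have "\<dots> = 0" by (simp add: algebra_simps)
  finally have 2: "((p-mu)*(r-mu) - q*q')*y = 0" .
  have "x \<noteq> 0 \<or> y \<noteq> 0" using v vec2_nz x_def y_def by auto
  thus ?thesis using 1 2 p_def q_def q'_def r_def by auto
qed

theorem lemma3:
  fixes A :: "real^2^2" and lambda :: real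
  assumes "transpose A = A"
    and "lambda > 0"
    and "mat_eigenvalues A = {1, lambda}"
  shows "{h * cnj (mat_act A h) | h. True} = sector (arcsin (\<bar>lambda - 1\<bar> / (lambda + 1)))"
proof -
  have "(transpose A)$1$2 = A$2$1" by (simp add: transpose_def)
  hence qq: "A$2$1 = A$1$2" using assms(1) by simp
  obtain p q r where P: "A$1$1 = p" "A$1$2 = q" "A$2$1 = q" "A$2$2 = r" using qq by blast
  have ma: "mat_act A h = Complex (p * Re h + q * Im h) (q * Re h + r * Im h)" for h
    using mat_act_eq[of A h] unfolding P .
  have "1 \<in> mat_eigenvalues A" using assms(3) by auto
  then obtain v where v: "v \<noteq> 0" "A *v v = v" by (auto simp: mat_eigenvalues_def)
  define c0 where "c0 = v$1" define d0 where "d0 = v$2"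
  have e1: "p*c0 + q*d0 = c0" and e2: "q*c0 + r*d0 = d0"
    using arg_cong[OF v(2), of "\<lambda>w. w$1"] arg_cong[OF v(2), of "\<lambda>w. w$2"]
    by (auto simp: mulv_2 P c0_def d0_def)
  have cnz: "c0 \<noteq> 0 \<or> d0 \<noteq> 0" using v(1) by (simp add: vec2_nz c0_def d0_def)
  hence nz: "c0^2 + d0^2 > 0" by (simp add: sum_power2_gt_zero_iff)
  define n where "n = sqrt (c0^2 + d0^2)"
  have n: "n > 0" "n^2 = c0^2 + d0^2" using nz by (auto simp: n_def)
  define c where "c = c0/n" define d where "d = d0/n"
  have "c^2 + d^2 = (c0^2+d0^2)/n^2" by (simp add: c_def d_def power_divide add_divide_distrib)
  hence cd1: "c^2 + d^2 = 1" using n nz cnz by auto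
  have f1: "p*c + q*d = c" using e1 n by (simp add: c_def d_def field_simps)
  have f2: "q*c + r*d = d" using e2 n by (simp add: c_def d_def field_simps)
  define mu where "mu = p + r - 1"
  have g1: "-p*d + q*c = -mu*d" using f2 by (simp add: mu_def algebra_simps)
  have g2: "-q*d + r*c = mu*c" using f1 by (simp add: mu_def algebra_simps)
  have "mu \<in> mat_eigenvalues A"
  proof -
    define w :: "real^2" where "w = vector [-d, c]"
    have "w \<noteq> 0" using cd1 by (auto simp: vec2_nz w_def)
    moreover have "A *v w = mu *\<^sub>R w"
      unfolding vec_eq_iff forall_2 using g1 g2
      by (simp add: mulv_2 w_def P algebra_simps)
    ultimately show ?thesis by (auto simp: mat_eigenvalues_def)
  qed
  hence mu1: "mu = 1 \<or> mu = lambda" using assms(3) by auto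
  have "1 \<in> mat_eigenvalues A" using assms(3) by auto
  from eig2[OF this] have d1: "(p-1)*(r-1) - q*q = 0" using P by simp
  have "lambda \<in> mat_eigenvalues A" using assms(3) by auto
  from eig2[OF this] have dl: "(p-lambda)*(r-lambda) - q*q = 0" using P by simp
  have "(lambda - 1)*(lambda - mu) = (p-lambda)*(r-lambda) - q*q - ((p-1)*(r-1) - q*q)"
    by (simp add: mu_def algebra_simps)
  hence "(lambda - 1)*(lambda - mu) = 0" using d1 dl by simp
  hence mul: "mu = lambda" using mu1 by auto
  have form: "Complex (a*c - b*d) (a*d + b*c) * cnj (mat_act A (Complex (a*c - b*d) (a*d + b*c)))
      = Complex (a^2 + lambda*b^2) ((1-lambda)*a*b)" for a b
  proof -
    have M: "mat_act A (Complex (a*c - b*d) (a*d + b*c)) = Complex (a*c - lambda*b*d) (a*d + lambda*b*c)"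
    proof -
      have "p*(a*c - b*d) + q*(a*d + b*c) = a*(p*c+q*d) + b*(-p*d+q*c)" by (simp add: algebra_simps)
      moreover have "q*(a*c - b*d) + r*(a*d + b*c) = a*(q*c+r*d) + b*(-q*d+r*c)" by (simp add: algebra_simps)
      ultimately show ?thesis using f1 f2 g1 g2 mul by (simp add: ma)
    qed
    have R: "(a*c - b*d)*(a*c - lambda*b*d) + (a*d + b*c)*(a*d + lambda*b*c) = (a^2 + lambda*b^2)*(c^2+d^2)"
      by (simp add: algebra_simps power2_eq_square)
    have I: "(a*d + b*c)*(a*c - lambda*b*d) - (a*c - b*d)*(a*d + lambda*b*c) = (1-lambda)*a*b*(c^2+d^2)"
      by (simp add: algebra_simps power2_eq_square)
    have C: "Complex x y * cnj (Complex X' Y') = Complex (x*X' + y*Y') (y*X' - x*Y')" for x y X' Y'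
      by (simp add: complex_eq_iff)
    show ?thesis unfolding M C R I cd1 by simp
  qed
  have "{h * cnj (mat_act A h) | h. True} = {Complex (a^2 + lambda*b^2) ((1-lambda)*a*b) | a b. True}"
  proof (rule set_eqI, rule iffI)
    fix z assume "z \<in> {h * cnj (mat_act A h) | h. True}"
    then obtain h where z: "z = h * cnj (mat_act A h)" by auto
    define a where "a = Re h * c + Im h * d"
    define b where "b = - Re h * d + Im h * c"
    have "a*c - b*d = Re h * (c^2+d^2)" "a*d + b*c = Im h * (c^2+d^2)"
      by (simp_all add: a_def b_def algebra_simps power2_eq_square)
    hence "h = Complex (a*c - b*d) (a*d + b*c)" using cd1 by (simp add: complex_eq_iff)
    hence "z = Complex (a^2 + lambda*b^2) ((1-lambda)*a*b)" using z form by simp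
    thus "z \<in> {Complex (a^2 + lambda*b^2) ((1-lambda)*a*b) | a b. True}" by blast
  next
    fix z assume "z \<in> {Complex (a^2 + lambda*b^2) ((1-lambda)*a*b) | a b. True}"
    then obtain a b where "z = Complex (a^2 + lambda*b^2) ((1-lambda)*a*b)" by auto
    hence "z = Complex (a*c - b*d) (a*d + b*c) * cnj (mat_act A (Complex (a*c - b*d) (a*d + b*c)))"
      using form by simp
    thus "z \<in> {h * cnj (mat_act A h) | h. True}" by blast
  qed
  also have "\<dots> = sector (arcsin (\<bar>lambda - 1\<bar> / (lambda + 1)))"
    using image_sector[OF assms(2)] .
  finally show ?thesis .
qed


end
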